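(* Let $z_1,\dots,z_m\in\partial\mathbb{D}$ be distinct, $\mu=\sum_{j=1}^m\mu_j\delta_{z_j}$ with $\mu_j>0$, $\sum\mu_j=1$, and $G$ real-valued on $\{z_1,\dots,z_m\}$, numbered so that $G(z_1)\ge\cdots\ge G(z_m)$. Let $K_1,\dots,K_L$ be the $K$-groups $K_i=\{k_{i-1}+1,\dots,k_i\}$ ($k_0=0$, $k_L=m$), i.e. maximal blocks of consecutive indices on which $G(z_\cdot)$ is constant. Let $\mu_t=e^{tG}\mu/\int e^{tG}d\mu$, and let $\mu^{(K_i)}=\sum_{\ell\in K_i}\mu^{(K_i)}_\ell\delta_{z_\ell}$ with \[ \mu^{(K_i)}_\ell=\frac{\bigl[\prod_{p=1}^{k_{i-1}}|z_\ell-z_p|^2\bigr]\mu_\ell}{\sum_{r\in K_i}\bigl[\prod_{p=1}^{k_{i-1}}|z_r-z_p|^2\bigr]\mu_r}. \] Then for every $i$ and $\ell\in K_i$, coefficientwise (equivalently, uniformly on compact subsets of $\mathbb{C}$), \[ \lim_{t\to\infty}\Phi_\ell(z;\mu_t)=\prod_{p=1}^{k_{i-1}}(z-z_p)\;\Phi_{\ell-k_{i-1}}(z;\mu^{(K_i)}). \]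
   Context: $\Phi_n(z;\nu)$ denotes the monic orthogonal polynomial of degree $n$ for a positive measure $\nu$ on $\partial\mathbb{D}$ whose support has at least $n$ points; $\Phi_0=1$; empty products equal $1$. *)

theory Defs
  imports "HOL-Analysis.Analysis" "HOL-Computational_Algebra.Polynomial"
begin

text \<open>A finitely supported positive measure on the unit circle is represented by
  atoms z j (j in a finite index set I) with weights w j.\<close>

definition disc_inner :: "(nat \<Rightarrow> complex) \<Rightarrow> (nat \<Rightarrow> real) \<Rightarrow> nat set
    \<Rightarrow> complex poly \<Rightarrow> complex poly \<Rightarrow> complex" where
  "disc_inner z w I p q = (\<Sum>j\<in>I. complex_of_real (w j) * poly p (z j) * cnj (poly q (z j)))"

definition opuc :: "(nat \<Rightarrow> complex) \<Rightarrow> (nat \<Rightarrow> real) \<Rightarrow> nat set \<Rightarrow> nat \<Rightarrow> complex poly" where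
  "opuc z w I n = (THE p. degree p = n \<and> coeff p n = 1 \<and>
      (\<forall>k<n. disc_inner z w I p (monom 1 k) = 0))"

definition tilt_weights :: "(nat \<Rightarrow> complex) \<Rightarrow> (complex \<Rightarrow> real) \<Rightarrow> (nat \<Rightarrow> real)
    \<Rightarrow> nat \<Rightarrow> real \<Rightarrow> nat \<Rightarrow> real" where
  "tilt_weights z G \<mu> m t j =
     exp (t * G (z j)) * \<mu> j / (\<Sum>r\<in>{1..m}. exp (t * G (z r)) * \<mu> r)"

definition Kgroup :: "(nat \<Rightarrow> nat) \<Rightarrow> nat \<Rightarrow> nat set" where
  "Kgroup k i = {k (i - 1) + 1 .. k i}"

definition Kweights :: "(nat \<Rightarrow> complex) \<Rightarrow> (nat \<Rightarrow> real) \<Rightarrow> (nat \<Rightarrow> nat) \<Rightarrow> nat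
    \<Rightarrow> nat \<Rightarrow> real" where
  "Kweights z \<mu> k i l =
     (\<Prod>p\<in>{1..k (i - 1)}. (cmod (z l - z p))\<^sup>2) * \<mu> l /
     (\<Sum>r\<in>Kgroup k i. (\<Prod>p\<in>{1..k (i - 1)}. (cmod (z r - z p))\<^sup>2) * \<mu> r)"

end

theory Submission
  imports Defs
begin

lemma ip_add_left: "disc_inner z w I (p + q) r = disc_inner z w I p r + disc_inner z w I q r"
  unfolding disc_inner_def by (simp add: algebra_simps sum.distrib)
lemma ip_diff_left: "disc_inner z w I (p - q) r = disc_inner z w I p r - disc_inner z w I q r"
  unfolding disc_inner_def by (simp add: algebra_simps sum_subtractf)
lemma ip_smult_left: "disc_inner z w I (smult c p) r = c * disc_inner z w I p r"
  unfolding disc_inner_def by (simp add: algebra_simps sum_distrib_left)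
lemma ip_sym: "disc_inner z w I q p = cnj (disc_inner z w I p q)"
  unfolding disc_inner_def by (simp add: algebra_simps)
lemma ip_add_right: "disc_inner z w I r (p + q) = disc_inner z w I r p + disc_inner z w I r q"
  unfolding disc_inner_def by (simp add: algebra_simps sum.distrib)
lemma ip_diff_right: "disc_inner z w I r (p - q) = disc_inner z w I r p - disc_inner z w I r q"
  unfolding disc_inner_def by (simp add: algebra_simps sum_subtractf)
lemma ip_smult_right: "disc_inner z w I r (smult c p) = cnj c * disc_inner z w I r p"
  unfolding disc_inner_def by (simp add: algebra_simps sum_distrib_left)
lemma ip_zero_left[simp]: "disc_inner z w I 0 r = 0"
  unfolding disc_inner_def by simp
lemma ip_zero_right[simp]: "disc_inner z w I r 0 = 0"
  unfolding disc_inner_def by simp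
lemma ip_sum_left: "disc_inner z w I (\<Sum>a\<in>A. f a) r = (\<Sum>a\<in>A. disc_inner z w I (f a) r)"
  by (induction A rule: infinite_finite_induct) (auto simp: ip_add_left)
lemma ip_sum_right: "disc_inner z w I r (\<Sum>a\<in>A. f a) = (\<Sum>a\<in>A. disc_inner z w I r (f a))"
  by (induction A rule: infinite_finite_induct) (auto simp: ip_add_right)

definition nrm :: "(nat \<Rightarrow> complex) \<Rightarrow> (nat \<Rightarrow> real) \<Rightarrow> nat set \<Rightarrow> complex poly \<Rightarrow> real" where
  "nrm z w I p = (\<Sum>j\<in>I. w j * (cmod (poly p (z j)))\<^sup>2)"

lemma ip_self: "disc_inner z w I p p = of_real (nrm z w I p)"
proof -
  have "\<And>j. complex_of_real (w j) * poly p (z j) * cnj (poly p (z j)) =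
     of_real (w j * (cmod (poly p (z j)))\<^sup>2)"
    by (simp only: of_real_mult complex_norm_square mult.assoc)
  then have "(\<Sum>j\<in>I. complex_of_real (w j) * poly p (z j) * cnj (poly p (z j))) =
     (\<Sum>j\<in>I. of_real (w j * (cmod (poly p (z j)))\<^sup>2))" by (rule sum.cong[OF refl])
  then show ?thesis by (simp only: disc_inner_def nrm_def of_real_sum)
qed

lemma nrm_nonneg: "(\<And>j. j \<in> I \<Longrightarrow> w j \<ge> 0) \<Longrightarrow> nrm z w I p \<ge> 0"
  unfolding nrm_def by (intro sum_nonneg mult_nonneg_nonneg zero_le_power2) auto

lemma nrm_zero:
  assumes "finite I" "\<forall>j\<in>I. w j > 0" "nrm z w I p = 0" "j \<in> I"
  shows "poly p (z j) = 0"
proof -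
  have nn: "0 \<le> w x * (cmod (poly p (z x)))\<^sup>2" if "x \<in> I" for x
  proof -
    have "w x \<ge> 0" using assms(2) that less_imp_le by blast
    then show "0 \<le> w x * (cmod (poly p (z x)))\<^sup>2" by simp
  qed
  have "\<forall>j\<in>I. w j * (cmod (poly p (z j)))\<^sup>2 = 0"
    using sum_nonneg_eq_0_iff[OF assms(1) nn] assms(3) unfolding nrm_def by simp
  then have "w j * (cmod (poly p (z j)))\<^sup>2 = 0" using assms(4) by simp
  moreover have "w j \<noteq> 0" using assms(2) assms(4) by force
  ultimately show ?thesis by simp
qed

lemma nrm_ge_term:
  assumes "finite I" "\<forall>j\<in>I. w j \<ge> 0" "j \<in> I"
  shows "w j * (cmod (poly p (z j)))\<^sup>2 \<le> nrm z w I p"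
  unfolding nrm_def using assms by (intro member_le_sum mult_nonneg_nonneg zero_le_power2) auto

lemma nrm_mono_set:
  assumes "finite I" "\<forall>j\<in>I. w j \<ge> 0" "J \<subseteq> I"
  shows "nrm z w J p \<le> nrm z w I p"
  unfolding nrm_def using assms by (intro sum_mono2 mult_nonneg_nonneg zero_le_power2) auto

lemma vanish_zero:
  fixes d :: "complex poly"
  assumes "finite I" "inj_on z I" "\<And>j. j \<in> I \<Longrightarrow> poly d (z j) = 0" "degree d < card I"
  shows "d = 0"
proof -
  have c: "card (z ` I) = card I" using assms(2) by (rule card_image)
  have "degree d < card (z ` I)" using assms(4) c by simp
  moreover have "degree (0::complex poly) < card (z ` I)" using assms(4) c by simp
  moreover have "\<And>x. x \<in> z ` I \<Longrightarrow> poly d x = poly 0 x" using assms(3) by auto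
  ultimately show ?thesis using poly_eqI_degree[of "z ` I" d 0] by blast
qed

lemma orth_all:
  assumes "\<forall>k<n. disc_inner z w I p (monom 1 k) = 0" "degree q < n"
  shows "disc_inner z w I p q = 0"
proof -
  have "disc_inner z w I p q = disc_inner z w I p (\<Sum>i\<le>degree q. monom (coeff q i) i)"
    by (simp add: poly_as_sum_of_monoms)
  also have "\<dots> = (\<Sum>i\<le>degree q. cnj (coeff q i) * disc_inner z w I p (monom 1 i))"
    unfolding ip_sum_right by (intro sum.cong refl) (metis ip_smult_right mult.right_neutral smult_monom)
  also have "\<dots> = 0" using assms by (intro sum.neutral) auto
  finally show ?thesis .
qed

definition orthP where
  "orthP z w I n p \<longleftrightarrow> degree p = n \<and> coeff p n = 1 \<and> (\<forall>k<n. disc_inner z w I p (monom 1 k) = 0)"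

lemma span_monic:
  fixes f :: "nat \<Rightarrow> complex poly"
  assumes "\<And>k. k < n \<Longrightarrow> degree (f k) = k \<and> coeff (f k) k = 1"
  shows "degree q < n \<Longrightarrow> \<exists>c. q = (\<Sum>k<n. smult (c k) (f k))"
  using assms
proof (induction n arbitrary: q)
  case 0 then show ?case by simp
next
  case (Suc n)
  have fn: "degree (f n) = n" "coeff (f n) n = 1" using Suc.prems(2)[of n] by auto
  have dq: "degree q \<le> n" using Suc.prems(1) by simp
  define q' where "q' = q - smult (coeff q n) (f n)"
  have cq: "coeff q' i = 0" if "n \<le> i" for i
  proof (cases "i = n")
    case True then show ?thesis using fn by (simp add: q'_def)
  next
    case False
    then have "i > n" using \<open>n \<le> i\<close> by simp
    then have "coeff q i = 0" "coeff (f n) i = 0" using dq fn(1) coeff_eq_0 by (metis le_less_trans)+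
    then show ?thesis by (simp add: q'_def)
  qed
  have "\<exists>c. q' = (\<Sum>k<n. smult (c k) (f k))"
  proof (cases "q' = 0")
    case True then show ?thesis by (intro exI[of _ "\<lambda>_. 0"]) simp
  next
    case False
    then have "degree q' < n" using cq by (intro degree_lessI) auto
    moreover have "\<And>k. k < n \<Longrightarrow> degree (f k) = k \<and> coeff (f k) k = 1"
      using Suc.prems(2) by simp
    ultimately show ?thesis by (rule Suc.IH)
  qed
  then obtain c where c: "q' = (\<Sum>k<n. smult (c k) (f k))" ..
  have q: "q = q' + smult (coeff q n) (f n)" by (simp add: q'_def)
  have e1: "(\<Sum>k<n. smult ((c(n := coeff q n)) k) (f k)) = q'"
    unfolding c by (intro sum.cong refl) simp
  have "(\<Sum>k<Suc n. smult ((c(n := coeff q n)) k) (f k)) =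
     (\<Sum>k<n. smult ((c(n := coeff q n)) k) (f k)) + smult ((c(n := coeff q n)) n) (f n)"
    by (rule sum.lessThan_Suc)
  then have "(\<Sum>k<Suc n. smult ((c(n := coeff q n)) k) (f k)) = q' + smult (coeff q n) (f n)"
    unfolding e1 by simp
  then have "q = (\<Sum>k<Suc n. smult ((c(n := coeff q n)) k) (f k))"
    by (rule trans[OF q sym])
  then show ?case by (rule exI[of _ "c(n := coeff q n)"])
qed


lemma ip_self_zero:
  assumes "finite I" "inj_on z I" "\<forall>j\<in>I. w j > 0"
    and "disc_inner z w I d d = 0" "degree d < card I"
  shows "d = 0"
proof -
  have "nrm z w I d = 0" using assms(4) unfolding ip_self by simp
  then have "\<And>j. j \<in> I \<Longrightarrow> poly d (z j) = 0" using nrm_zero[OF assms(1,3)] by blast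
  then show ?thesis using vanish_zero[OF assms(1,2)] assms(5) by blast
qed

lemma op_unique:
  assumes "finite I" "inj_on z I" "\<forall>j\<in>I. w j > 0" "n \<le> card I"
    and "orthP z w I n p" "orthP z w I n q"
  shows "p = q"
proof -
  define d where "d = p - q"
  have cd: "coeff d i = 0" if "n \<le> i" for i
  proof (cases "i = n")
    case True then show ?thesis using assms(5,6) unfolding orthP_def d_def by simp
  next
    case False
    then have "n < i" using that by simp
    then have "coeff p i = 0" "coeff q i = 0" using assms(5,6) unfolding orthP_def
      by (auto intro: coeff_eq_0)
    then show ?thesis unfolding d_def by simp
  qed
  show ?thesis
  proof (rule ccontr)
    assume "p \<noteq> q"
    then have "d \<noteq> 0" unfolding d_def by simp
    then have dl: "degree d < n" using cd by (intro degree_lessI) auto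
    have "disc_inner z w I p d = 0" "disc_inner z w I q d = 0"
      using orth_all[OF _ dl] assms(5,6) unfolding orthP_def by blast+
    then have "disc_inner z w I d d = 0" unfolding d_def ip_diff_left by simp
    then have "d = 0" using ip_self_zero[OF assms(1,2,3)] dl assms(4) by simp
    with \<open>d \<noteq> 0\<close> show False by simp
  qed
qed

lemma opuc_eq:
  assumes "finite I" "inj_on z I" "\<forall>j\<in>I. w j > 0" "n \<le> card I"
    and "orthP z w I n p"
  shows "opuc z w I n = p"
  unfolding opuc_def
proof (rule the_equality)
  show "degree p = n \<and> coeff p n = 1 \<and> (\<forall>k<n. disc_inner z w I p (monom 1 k) = 0)"
    using assms(5) unfolding orthP_def .
  fix q assume "degree q = n \<and> coeff q n = 1 \<and> (\<forall>k<n. disc_inner z w I q (monom 1 k) = 0)"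
  then have "orthP z w I n q" unfolding orthP_def .
  then show "q = p" using op_unique[OF assms(1-4)] assms(5) by blast
qed

lemma op_exists:
  assumes "finite I" "inj_on z I" "\<forall>j\<in>I. w j > 0"
  shows "n \<le> card I \<Longrightarrow> \<exists>p. orthP z w I n p"
proof (induction n rule: less_induct)
  case (less n)
  define f where "f k = (SOME p. orthP z w I k p)" for k
  have fP: "orthP z w I k (f k)" if "k < n" for k
  proof -
    have "\<exists>p. orthP z w I k p" using less.IH[of k] that less.prems by simp
    then show ?thesis unfolding f_def by (rule someI_ex)
  qed
  have fd: "degree (f k) = k" "coeff (f k) k = 1" if "k < n" for k
    using fP[OF that] unfolding orthP_def by auto
  have fo: "disc_inner z w I (f k) q = 0" if "k < n" "degree q < k" for k q
    using fP[OF that(1)] orth_all[OF _ that(2)] unfolding orthP_def by blast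
  have ff: "disc_inner z w I (f k) (f j) = 0" if "k < n" "j < n" "k \<noteq> j" for k j
  proof (cases "j < k")
    case True then show ?thesis using fo[OF that(1)] fd[OF that(2)] by simp
  next
    case False
    then have "k < j" using that(3) by simp
    then have "disc_inner z w I (f j) (f k) = 0" using fo[OF that(2)] fd[OF that(1)] by simp
    then show ?thesis by (subst ip_sym) simp
  qed
  have fnz: "disc_inner z w I (f k) (f k) \<noteq> 0" if "k < n" for k
  proof
    assume "disc_inner z w I (f k) (f k) = 0"
    moreover have "degree (f k) < card I" using fd[OF that] that less.prems by simp
    ultimately have "f k = 0" using ip_self_zero[OF assms] by blast
    then show False using fd(2)[OF that] by simp
  qed
  define c where "c k = disc_inner z w I (monom 1 n) (f k) / disc_inner z w I (f k) (f k)" for k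
  define p where "p = monom 1 n - (\<Sum>k<n. smult (c k) (f k))"
  have pf: "disc_inner z w I p (f j) = 0" if "j < n" for j
  proof -
    have "(\<Sum>k<n. c k * disc_inner z w I (f k) (f j)) = c j * disc_inner z w I (f j) (f j)"
      using ff[OF _ that] that by (subst sum.remove[of _ j]) auto
    also have "\<dots> = disc_inner z w I (monom 1 n) (f j)"
      unfolding c_def using fnz[OF that] by simp
    finally show ?thesis unfolding p_def ip_diff_left ip_sum_left ip_smult_left by simp
  qed
  have porth: "\<forall>k<n. disc_inner z w I p (monom 1 k) = 0"
  proof (intro allI impI)
    fix k assume "k < n"
    then have "degree (monom (1::complex) k) < n" by (simp add: degree_monom_eq)
    then obtain a where a: "monom 1 k = (\<Sum>i<n. smult (a i) (f i))"
      using span_monic[of n f] fd by blast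
    show "disc_inner z w I p (monom 1 k) = 0"
      unfolding a ip_sum_right ip_smult_right using pf by simp
  qed
  have cpn: "coeff p n = 1"
  proof -
    have "coeff (f k) n = 0" if "k < n" for k using fd[OF that] that by (intro coeff_eq_0) simp
    then show ?thesis unfolding p_def by (simp add: coeff_sum)
  qed
  have cpi: "coeff p i = 0" if "n < i" for i
  proof -
    have "coeff (f k) i = 0" if "k < n" for k using fd[OF that] that \<open>n < i\<close> by (intro coeff_eq_0) simp
    then show ?thesis unfolding p_def using that by (simp add: coeff_sum)
  qed
  have "degree p = n"
  proof (rule antisym)
    show "degree p \<le> n" using cpi by (intro degree_le) auto
    show "n \<le> degree p" using cpn by (intro le_degree) simp
  qed
  then have "orthP z w I n p" unfolding orthP_def using cpn porth by simp
  then show ?case by blast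
qed

lemma opuc_orthP:
  assumes "finite I" "inj_on z I" "\<forall>j\<in>I. w j > 0" "n \<le> card I"
  shows "orthP z w I n (opuc z w I n)"
proof -
  obtain p where "orthP z w I n p" using op_exists[OF assms(1-3) assms(4)] by blast
  moreover then have "opuc z w I n = p" using opuc_eq[OF assms] by blast
  ultimately show ?thesis by simp
qed

lemma opuc_scale:
  assumes "\<And>j. j \<in> I \<Longrightarrow> w' j = c * w j" "c \<noteq> 0"
  shows "opuc z w' I n = opuc z w I n"
proof -
  have "disc_inner z w' I p q = of_real c * disc_inner z w I p q" for p q
    unfolding disc_inner_def sum_distrib_left using assms(1)
    by (intro sum.cong refl) (simp add: algebra_simps)
  then show ?thesis unfolding opuc_def using assms(2) by simp
qed

definition lag :: "(nat \<Rightarrow> complex) \<Rightarrow> nat set \<Rightarrow> nat \<Rightarrow> complex poly" where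
  "lag z S p = (\<Prod>q\<in>S-{p}. smult (1/(z p - z q)) [:-z q,1:])"
definition interp :: "(nat \<Rightarrow> complex) \<Rightarrow> nat set \<Rightarrow> (nat \<Rightarrow> complex) \<Rightarrow> complex poly" where
  "interp z S v = (\<Sum>p\<in>S. smult (v p) (lag z S p))"

lemma lag_at:
  assumes "inj_on z S" "p \<in> S"
  shows "poly (lag z S p) (z p) = 1"
proof -
  have "poly (smult (1/(z p - z q)) [:-z q,1:]) (z p) = 1" if "q \<in> S - {p}" for q
  proof -
    have nz: "z p - z q \<noteq> 0" using assms that inj_on_eq_iff[OF assms(1)] by auto
    have "poly [:-z q,1:] (z p) = z p - z q" by simp
    then have "poly (smult (1/(z p - z q)) [:-z q,1:]) (z p) = (1/(z p - z q)) * (z p - z q)"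
      by (simp only: poly_smult)
    also have "\<dots> = 1" using nz by simp
    finally show ?thesis .
  qed
  then show ?thesis unfolding lag_def poly_prod by (intro prod.neutral) blast
qed

lemma lag_other:
  assumes "finite S" "p \<in> S" "q \<in> S" "q \<noteq> p"
  shows "poly (lag z S p) (z q) = 0"
  unfolding lag_def poly_prod using assms by (intro prod_zero) (auto intro!: bexI[of _ q])

lemma degree_lag:
  assumes "finite S" "p \<in> S"
  shows "degree (lag z S p) \<le> card S - 1"
proof -
  have "degree (lag z S p) \<le> sum (degree \<circ> (\<lambda>q. smult (1/(z p - z q)) [:-z q,1:])) (S-{p})"
    unfolding lag_def by (rule degree_prod_sum_le) (use assms in simp)
  also have "\<dots> \<le> (\<Sum>q\<in>S-{p}. 1)"
  proof (intro sum_mono)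
    fix q
    have "degree (smult (1/(z p - z q)) [:-z q,1:]) \<le> degree [:-z q,(1::complex):]" by (rule degree_smult_le)
    then show "(degree \<circ> (\<lambda>q. smult (1/(z p - z q)) [:-z q,1:])) q \<le> 1" by simp
  qed
  also have "\<dots> = card S - 1" using assms by simp
  finally show ?thesis .
qed

lemma poly_interp: "poly (interp z S v) x = (\<Sum>p\<in>S. v p * poly (lag z S p) x)"
  unfolding interp_def poly_sum by simp

lemma coeff_interp: "coeff (interp z S v) c = (\<Sum>p\<in>S. v p * coeff (lag z S p) c)"
  unfolding interp_def coeff_sum by simp

lemma interp_at:
  assumes "finite S" "inj_on z S" "q \<in> S"
  shows "poly (interp z S v) (z q) = v q"
proof -
  have "(\<Sum>p\<in>S. v p * poly (lag z S p) (z q)) = v q * poly (lag z S q) (z q)"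
  proof -
    have "(\<Sum>p\<in>S. v p * poly (lag z S p) (z q)) = v q * poly (lag z S q) (z q) +
       (\<Sum>p\<in>S-{q}. v p * poly (lag z S p) (z q))"
      using assms by (rule_tac sum.remove) auto
    also have "(\<Sum>p\<in>S-{q}. v p * poly (lag z S p) (z q)) = 0"
      using assms by (intro sum.neutral) (auto simp: lag_other)
    finally show ?thesis by simp
  qed
  then show ?thesis unfolding poly_interp using lag_at[OF assms(2,3)] by simp
qed

lemma degree_interp:
  assumes "finite S"
  shows "degree (interp z S v) \<le> card S - 1"
  unfolding interp_def using assms
proof (intro degree_sum_le)
  fix p assume "p \<in> S"
  show "degree (smult (v p) (lag z S p)) \<le> card S - 1"
    using degree_smult_le[of "v p" "lag z S p"] degree_lag[of S p z, OF assms \<open>p \<in> S\<close>] by linarith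
qed


lemma interp_unique:
  fixes p :: "complex poly"
  assumes "finite S" "inj_on z S" "degree p < card S"
  shows "p = interp z S (\<lambda>s. poly p (z s))"
proof -
  define d where "d = p - interp z S (\<lambda>s. poly p (z s))"
  have "degree (interp z S (\<lambda>s. poly p (z s))) < card S"
    using degree_interp[OF assms(1), of z "\<lambda>s. poly p (z s)"] assms(3) by linarith
  then have "degree d < card S" unfolding d_def using assms(3) by (intro degree_diff_less)
  moreover have "\<And>j. j \<in> S \<Longrightarrow> poly d (z j) = 0"
    unfolding d_def using interp_at[OF assms(1,2)] by simp
  ultimately have "d = 0" using vanish_zero[OF assms(1,2)] by blast
  then show ?thesis unfolding d_def by simp
qed

lemma prod_dvd_vanish:
  fixes p :: "complex poly"
  assumes "finite S" "inj_on z S" "\<forall>s\<in>S. poly p (z s) = 0"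
  shows "(\<Prod>s\<in>S. [:-z s,1:]) dvd p"
  using assms
proof (induction S arbitrary: p rule: finite_induct)
  case empty then show ?case by simp
next
  case (insert a S)
  have "poly p (z a) = 0" using insert.prems by simp
  then obtain q where q: "p = [:-z a,1:] * q" using poly_eq_0_iff_dvd by (metis dvdE)
  have "poly q (z s) = 0" if "s \<in> S" for s
  proof -
    have "z s \<noteq> z a" using insert.prems(1) insert.hyps(2) that by (auto simp: inj_on_def)
    moreover have "poly p (z s) = 0" using insert.prems(2) that by simp
    ultimately show ?thesis unfolding q by simp
  qed
  then have "(\<Prod>s\<in>S. [:-z s,1:]) dvd q"
    using insert.IH[of q] insert.prems(1) by (simp add: inj_on_insert)
  then have "[:-z a,1:] * (\<Prod>s\<in>S. [:-z s,1:]) dvd [:-z a,1:] * q" by (rule mult_dvd_mono[OF dvd_refl])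
  moreover have "(\<Prod>s\<in>insert a S. [:-z s,1:]) = [:-z a,1:] * (\<Prod>s\<in>S. [:-z s,1:])"
    using insert.hyps by (rule prod.insert)
  ultimately show ?case unfolding q by simp
qed

lemma tendsto_interp_coeff:
  assumes "finite S" "\<And>s. s \<in> S \<Longrightarrow> ((\<lambda>t. v t s) \<longlongrightarrow> 0) F"
  shows "((\<lambda>t. coeff (interp z S (v t)) c) \<longlongrightarrow> 0) F"
  unfolding coeff_interp
  by (intro tendsto_null_sum tendsto_mult_left_zero assms(2))

lemma tendsto_interp_poly:
  assumes "finite S" "\<And>s. s \<in> S \<Longrightarrow> ((\<lambda>t. v t s) \<longlongrightarrow> 0) F"
  shows "((\<lambda>t. poly (interp z S (v t)) x) \<longlongrightarrow> 0) F"
  unfolding poly_interp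
  by (intro tendsto_null_sum tendsto_mult_left_zero assms(2))


lemma pythag:
  assumes "disc_inner z w I a b = 0"
  shows "nrm z w I (a + b) = nrm z w I a + nrm z w I b"
proof -
  have "disc_inner z w I b a = 0" using assms by (subst ip_sym) simp
  then have "disc_inner z w I (a + b) (a + b) = disc_inner z w I a a + disc_inner z w I b b"
    using assms unfolding ip_add_left ip_add_right by simp
  then have "complex_of_real (nrm z w I (a + b)) = of_real (nrm z w I a + nrm z w I b)"
    unfolding ip_self by simp
  then show ?thesis using of_real_eq_iff by blast
qed

lemma sq_ineq:
  fixes a b :: complex and e :: real
  assumes "0 < e" "e \<le> 1"
  shows "(1 - e) * (cmod a)\<^sup>2 - (1/e) * (cmod b)\<^sup>2 \<le> (cmod (a + b))\<^sup>2"
proof -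
  define x where "x = cmod a"
  define y where "y = cmod b"
  have x0: "x \<ge> 0" and y0: "y \<ge> 0" unfolding x_def y_def by simp_all
  have tri: "x - y \<le> cmod (a + b)" unfolding x_def y_def
    by (metis add_diff_cancel_right' norm_triangle_ineq4 diff_le_eq add.commute norm_minus_commute)
  have key: "(1 - e) * x\<^sup>2 - (1/e) * y\<^sup>2 \<le> (max 0 (x - y))\<^sup>2"
  proof (cases "x \<le> y")
    case True
    have ex: "e * x\<^sup>2 \<ge> 0" using assms by simp
    have "(1 - e) * x\<^sup>2 = x\<^sup>2 - e * x\<^sup>2" by (simp add: algebra_simps)
    then have "(1 - e) * x\<^sup>2 \<le> x\<^sup>2" using ex by linarith
    also have "\<dots> \<le> y\<^sup>2" using True x0 by (simp add: power_mono)
    finally have "(1 - e) * x\<^sup>2 \<le> y\<^sup>2" .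
    have y1: "y\<^sup>2 \<le> (1/e) * y\<^sup>2"
    proof -
      have "1 \<le> 1/e" using assms by simp
      then show ?thesis using mult_right_mono[of 1 "1/e" "y\<^sup>2"] by simp
    qed
    have "(1 - e) * x\<^sup>2 - (1/e) * y\<^sup>2 \<le> 0" using \<open>(1 - e) * x\<^sup>2 \<le> y\<^sup>2\<close> y1 by linarith
    then show ?thesis using zero_le_power2[of "max 0 (x - y)"] by linarith
  next
    case False
    have "0 \<le> (e * x - y)\<^sup>2 / e" using assms by simp
    also have "(e * x - y)\<^sup>2 / e = e * x\<^sup>2 - 2 * x * y + (1/e) * y\<^sup>2"
      using assms by (simp add: field_simps power2_eq_square)
    finally have h: "0 \<le> e * x\<^sup>2 - 2 * x * y + (1/e) * y\<^sup>2" .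
    have "(x - y)\<^sup>2 - ((1 - e) * x\<^sup>2 - (1/e) * y\<^sup>2) = (e * x\<^sup>2 - 2 * x * y + (1/e) * y\<^sup>2) + y\<^sup>2"
      by (simp add: algebra_simps power2_eq_square)
    moreover have "y\<^sup>2 \<ge> 0" by simp
    ultimately have "(1 - e) * x\<^sup>2 - (1/e) * y\<^sup>2 \<le> (x - y)\<^sup>2" using h by linarith
    then show ?thesis using False by simp
  qed
  also have "\<dots> \<le> (cmod (a + b))\<^sup>2"
    using tri by (intro power_mono) auto
  finally show ?thesis unfolding x_def y_def .
qed


lemma nrm_add_ineq:
  assumes "finite I" "\<forall>j\<in>I. w j \<ge> 0" "0 < e" "e \<le> 1"
  shows "(1 - e) * nrm z w I a - (1/e) * nrm z w I b \<le> nrm z w I (a + b)"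
proof -
  have "(1 - e) * nrm z w I a - (1/e) * nrm z w I b =
      (\<Sum>j\<in>I. w j * ((1 - e) * (cmod (poly a (z j)))\<^sup>2 - (1/e) * (cmod (poly b (z j)))\<^sup>2))"
    unfolding nrm_def sum_distrib_left sum_subtractf[symmetric] by (intro sum.cong refl) (simp add: algebra_simps)
  also have "\<dots> \<le> (\<Sum>j\<in>I. w j * (cmod (poly a (z j) + poly b (z j)))\<^sup>2)"
  proof (intro sum_mono)
    fix j assume "j \<in> I"
    then have "w j \<ge> 0" using assms(2) by blast
    then show "w j * ((1 - e) * (cmod (poly a (z j)))\<^sup>2 - (1/e) * (cmod (poly b (z j)))\<^sup>2)
       \<le> w j * (cmod (poly a (z j) + poly b (z j)))\<^sup>2"
      using sq_ineq[OF assms(3,4)] by (intro mult_left_mono) auto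
  qed
  also have "\<dots> = nrm z w I (a + b)" unfolding nrm_def by simp
  finally show ?thesis .
qed

lemma exp_neg_tendsto:
  fixes c :: real
  assumes "c < 0"
  shows "((\<lambda>t::real. exp (t * c)) \<longlongrightarrow> 0) at_top"
proof -
  have "filterlim (\<lambda>t::real. c * t) at_bot at_top"
    by (rule filterlim_tendsto_neg_mult_at_bot[OF tendsto_const assms filterlim_ident])
  then have "((\<lambda>t::real. exp (c * t)) \<longlongrightarrow> 0) at_top"
    by (rule filterlim_compose[OF exp_at_bot])
  then show ?thesis by (simp add: mult.commute)
qed

lemma tendsto_sq_zero:
  fixes f :: "'a \<Rightarrow> complex"
  assumes "((\<lambda>t. (cmod (f t))\<^sup>2) \<longlongrightarrow> 0) F"
  shows "(f \<longlongrightarrow> 0) F"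
proof -
  have "((\<lambda>t. sqrt ((cmod (f t))\<^sup>2)) \<longlongrightarrow> sqrt 0) F"
    by (rule tendsto_real_sqrt[OF assms])
  then have "((\<lambda>t. cmod (f t)) \<longlongrightarrow> 0) F" by simp
  then show ?thesis by (simp only: tendsto_norm_zero_iff)
qed

lemma nrm_tendsto_zero:
  assumes "finite I" "\<And>j. j \<in> I \<Longrightarrow> ((\<lambda>t. poly (f t) (z j)) \<longlongrightarrow> 0) F"
  shows "((\<lambda>t. nrm z w I (f t)) \<longlongrightarrow> 0) F"
  unfolding nrm_def
proof (rule tendsto_null_sum)
  fix j assume "j \<in> I"
  have "((\<lambda>t. (cmod (poly (f t) (z j)))\<^sup>2) \<longlongrightarrow> (cmod 0)\<^sup>2) F"
    by (intro tendsto_power tendsto_norm assms(2) \<open>j \<in> I\<close>)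
  then have "((\<lambda>t. (cmod (poly (f t) (z j)))\<^sup>2) \<longlongrightarrow> 0) F" by simp
  then show "((\<lambda>t. w j * (cmod (poly (f t) (z j)))\<^sup>2) \<longlongrightarrow> 0) F" by (rule tendsto_mult_right_zero)
qed

lemma squeeze0:
  fixes a b :: "'a \<Rightarrow> real"
  assumes "eventually (\<lambda>t. 0 \<le> a t \<and> a t \<le> b t) F" "(b \<longlongrightarrow> 0) F"
  shows "(a \<longlongrightarrow> 0) F"
proof (rule tendsto_sandwich[of "\<lambda>_. 0" a F b 0])
  show "eventually (\<lambda>t. 0 \<le> a t) F" using assms(1) by (rule eventually_mono) simp
  show "eventually (\<lambda>t. a t \<le> b t) F" using assms(1) by (rule eventually_mono) simp
qed (auto simp: assms(2))

lemma deg_less_from_coeff: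
  fixes d :: "complex poly"
  assumes "\<And>i. n \<le> i \<Longrightarrow> coeff d i = 0" "0 < n"
  shows "degree d < n"
proof -
  have "degree d \<le> n - 1" using assms by (intro degree_le) auto
  then show ?thesis using assms(2) by linarith
qed

lemma monic_diff_coeff:
  fixes p q :: "complex poly"
  assumes "degree p = n" "coeff p n = 1" "degree q = n" "coeff q n = 1" "n \<le> i"
  shows "coeff (p - q) i = 0"
proof (cases "i = n")
  case True then show ?thesis using assms by simp
next
  case False
  then have "n < i" using assms(5) by simp
  then have "coeff p i = 0" "coeff q i = 0" using assms(1,3) by (auto intro: coeff_eq_0)
  then show ?thesis by simp
qed


lemma nrm_union:
  assumes "finite I" "finite J" "I \<inter> J = {}"
  shows "nrm z w (I \<union> J) p = nrm z w I p + nrm z w J p"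
  unfolding nrm_def using assms by (rule sum.union_disjoint)

theorem theorem3p4:
  fixes z :: "nat \<Rightarrow> complex" and \<mu> :: "nat \<Rightarrow> real" and G :: "complex \<Rightarrow> real"
    and m L :: nat and k :: "nat \<Rightarrow> nat"
  assumes dist: "inj_on z {1..m}"
    and circ: "\<And>j. j \<in> {1..m} \<Longrightarrow> cmod (z j) = 1"
    and pos: "\<And>j. j \<in> {1..m} \<Longrightarrow> \<mu> j > 0"
    and tot: "(\<Sum>j\<in>{1..m}. \<mu> j) = 1"
    and ord: "\<And>i j. 1 \<le> i \<Longrightarrow> i \<le> j \<Longrightarrow> j \<le> m \<Longrightarrow> G (z j) \<le> G (z i)"
    and k0: "k 0 = 0" and kL: "k L = m"
    and kmono: "\<And>i. i < L \<Longrightarrow> k i < k (Suc i)"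
    and kconst: "\<And>i a b. 1 \<le> i \<Longrightarrow> i \<le> L \<Longrightarrow> a \<in> Kgroup k i \<Longrightarrow> b \<in> Kgroup k i
                  \<Longrightarrow> G (z a) = G (z b)"
    and kmax: "\<And>i. 1 \<le> i \<Longrightarrow> i < L \<Longrightarrow> G (z (k i)) \<noteq> G (z (k i + 1))"
    and i: "1 \<le> i" "i \<le> L"
    and l: "l \<in> Kgroup k i"
  shows "\<forall>c. ((\<lambda>t::real. coeff (opuc z (tilt_weights z G \<mu> m t) {1..m} l) c)
            \<longlongrightarrow> coeff ((\<Prod>p\<in>{1..k (i - 1)}. [:- z p, 1:]) *
                    opuc z (Kweights z \<mu> k i) (Kgroup k i) (l - k (i - 1))) c) at_top"
proof -
  define k' where "k' = k (i - 1)"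
  define K where "K = k i"
  have kmono_le: "k a \<le> k b" if "a \<le> b" "b \<le> L" for a b
    using that
  proof (induction b)
    case 0 then show ?case by simp
  next
    case (Suc b)
    show ?case
    proof (cases "a = Suc b")
      case True then show ?thesis by simp
    next
      case False
      then have "a \<le> b" "b < L" using Suc.prems by auto
      then show ?thesis using Suc.IH kmono[of b] by simp
    qed
  qed
  have kk: "k' < K" unfolding k'_def K_def using kmono[of "i - 1"] i by simp
  have Km: "K \<le> m" unfolding K_def using kmono_le[of i L] i kL by simp
  have lC: "k' + 1 \<le> l" "l \<le> K" using l unfolding Kgroup_def k'_def K_def by auto
  have l1: "1 \<le> l" "l \<le> m" using lC Km by auto
  define B where "B = {1..k'}"
  define C where "C = Kgroup k i"
  define D where "D = {K+1..m}"
  have Ceq: "C = {k'+1..K}" unfolding C_def Kgroup_def k'_def K_def by simp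
  have finB: "finite B" and finC: "finite C" and finD: "finite D" and finM: "finite {1..m}"
    unfolding B_def Ceq D_def by auto
  have U: "{1..m} = (B \<union> C) \<union> D" unfolding B_def Ceq D_def using kk Km by auto
  have BC: "B \<inter> C = {}" "(B \<union> C) \<inter> D = {}" unfolding B_def Ceq D_def using kk by auto
  have BCsub: "B \<union> C \<subseteq> {1..m}" "C \<subseteq> {1..m}" "B \<subseteq> {1..m}" using U by auto
  have cardB: "card B = k'" unfolding B_def by simp
  have cardC: "card C = K - k'" unfolding Ceq by simp
  have lCm: "l \<in> C" using l unfolding C_def .
  define g where "g = G (z l)"
  have GC: "G (z j) = g" if "j \<in> C" for j
    unfolding g_def using kconst[OF i, of j l] l that unfolding C_def by simp
  have GB: "G (z j) > g" if "j \<in> B" for j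
  proof -
    have j: "1 \<le> j" "j \<le> k'" using that unfolding B_def by auto
    have "i \<noteq> 1" using j k0 unfolding k'_def by auto
    then have i1: "1 \<le> i - 1" "i - 1 < L" using i by auto
    have ne: "G (z k') \<noteq> G (z (k' + 1))" using kmax[OF i1] unfolding k'_def .
    have k'm: "k' + 1 \<le> m" using kk Km by simp
    have "G (z k') \<le> G (z j)" using ord[of j k'] j k'm by simp
    moreover have "G (z (k' + 1)) \<le> G (z k')" using ord[of k' "k' + 1"] j k'm by simp
    moreover have "G (z (k' + 1)) = g" using GC[of "k' + 1"] kk unfolding Ceq by simp
    ultimately show ?thesis using ne by linarith
  qed
  have GD: "G (z j) < g" if "j \<in> D" for j
  proof -
    have j: "K + 1 \<le> j" "j \<le> m" using that unfolding D_def by auto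
    have "i \<noteq> L" using j kL unfolding K_def by auto
    then have i1: "1 \<le> i" "i < L" using i by auto
    have ne: "G (z K) \<noteq> G (z (K + 1))" using kmax[OF i1] unfolding K_def .
    have "G (z j) \<le> G (z (K + 1))" using ord[of "K + 1" j] j by simp
    moreover have "G (z (K + 1)) \<le> G (z K)" using ord[of K "K + 1"] j kk by simp
    moreover have "G (z K) = g" using GC[of K] kk unfolding Ceq by simp
    ultimately show ?thesis using ne by linarith
  qed
  define lam where "lam t j = exp (t * (G (z j) - g)) * \<mu> j" for t j
  have lampos: "\<forall>j\<in>{1..m}. lam t j > 0" for t unfolding lam_def using pos by simp
  have lamnn: "\<forall>j\<in>{1..m}. lam t j \<ge> 0" for t using lampos[of t] less_imp_le by blast
  have lamC: "lam t j = \<mu> j" if "j \<in> C" for t j unfolding lam_def using GC[OF that] by simp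
  have lamge: "\<mu> j \<le> lam t j" if "t \<ge> 0" "j \<in> B \<union> C" for t j
  proof -
    have "G (z j) - g \<ge> 0" using that(2) GB GC by (auto simp: less_imp_le)
    then have "1 \<le> exp (t * (G (z j) - g))" using that(1) by simp
    moreover have "\<mu> j > 0" using pos that(2) BCsub by blast
    ultimately show ?thesis unfolding lam_def by simp
  qed
  have lamle: "lam t j \<le> \<mu> j" if "t \<ge> 0" "j \<in> D" for t j
  proof -
    have "G (z j) - g \<le> 0" using that(2) GD by (auto simp: less_imp_le)
    then have "exp (t * (G (z j) - g)) \<le> 1" using that(1) by (simp add: mult_nonneg_nonpos)
    moreover have "\<mu> j > 0" using pos that(2) U by blast
    ultimately show ?thesis unfolding lam_def by simp
  qed
  have mupos: "\<mu> j > 0" if "j \<in> B \<union> C \<union> D" for j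
  proof -
    have "j \<in> {1..m}" using that U by blast
    then show ?thesis by (rule pos)
  qed
  have munn: "\<forall>j\<in>C. \<mu> j \<ge> 0" "\<forall>j\<in>D. \<mu> j \<ge> 0" using mupos by (auto intro: less_imp_le)

  define P where "P t = opuc z (lam t) {1..m} l" for t
  have Peq: "opuc z (tilt_weights z G \<mu> m t) {1..m} l = P t" for t
  proof -
    define S where "S = (\<Sum>r\<in>{1..m}. exp (t * G (z r)) * \<mu> r)"
    have "S > 0" unfolding S_def using l1 pos by (intro sum_pos) auto
    have "tilt_weights z G \<mu> m t j = (exp (t * g) / S) * lam t j" if "j \<in> {1..m}" for j
    proof -
      have "exp (t * G (z j)) = exp (t * (G (z j) - g)) * exp (t * g)"
        by (simp add: exp_add[symmetric] algebra_simps)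
      then show ?thesis unfolding tilt_weights_def lam_def S_def by simp
    qed
    moreover have "exp (t * g) / S \<noteq> 0" using \<open>S > 0\<close> by simp
    ultimately show ?thesis unfolding P_def by (rule opuc_scale)
  qed
  have Porth: "orthP z (lam t) {1..m} l (P t)" for t
    unfolding P_def using opuc_orthP[OF finM dist lampos] l1 by simp

  define Pi where "Pi = (\<Prod>p\<in>B. [:- z p, 1:])"
  have Pi_at: "poly Pi x = (\<Prod>p\<in>B. x - z p)" for x unfolding Pi_def poly_prod by simp
  have Pi_zero: "poly Pi (z p) = 0" if "p \<in> B" for p
    unfolding Pi_at using finB that by (intro prod_zero) auto
  have Pi_nz: "poly Pi (z j) \<noteq> 0" if "j \<in> C" for j
  proof -
    have "z j - z p \<noteq> 0" if "p \<in> B" for p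
    proof -
      have "j \<noteq> p" using \<open>j \<in> C\<close> that BC by auto
      moreover have "j \<in> {1..m}" "p \<in> {1..m}" using \<open>j \<in> C\<close> that BCsub by auto
      ultimately show ?thesis using inj_on_eq_iff[OF dist] by simp
    qed
    then show ?thesis unfolding Pi_at using finB by simp
  qed
  have degPi: "degree Pi = k'"
  proof -
    have "degree Pi = (\<Sum>p\<in>B. degree [:- z p, (1::complex):])"
      unfolding Pi_def by (rule degree_prod_eq_sum_degree) auto
    then show ?thesis using cardB by simp
  qed
  have lcPi: "coeff Pi k' = 1"
  proof -
    have "lead_coeff Pi = (\<Prod>p\<in>B. lead_coeff [:- z p, (1::complex):])"
      unfolding Pi_def by (rule lead_coeff_prod)
    then show ?thesis using degPi by simp
  qed
  have Pinz: "Pi \<noteq> 0" using lcPi by auto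

  define Z where "Z = (\<Sum>r\<in>C. (\<Prod>p\<in>{1..k'}. (cmod (z r - z p))\<^sup>2) * \<mu> r)"
  have prodnorm: "(\<Prod>p\<in>{1..k'}. (cmod (z j - z p))\<^sup>2) = (cmod (poly Pi (z j)))\<^sup>2" for j
    unfolding Pi_at B_def prod_norm[symmetric] prod_power_distrib by simp
  have Zterm: "(cmod (poly Pi (z j)))\<^sup>2 * \<mu> j > 0" if "j \<in> C" for j
    using Pi_nz[OF that] pos[of j] BCsub that by auto
  have Zpos: "Z > 0" unfolding Z_def prodnorm using finC lCm Zterm
    by (intro sum_pos) auto
  define Kw where "Kw = Kweights z \<mu> k i"
  have Kw_eq: "Kw j = (cmod (poly Pi (z j)))\<^sup>2 * \<mu> j / Z" for j
    unfolding Kw_def Kweights_def Z_def C_def k'_def[symmetric] prodnorm ..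
  have Kwpos: "\<forall>j\<in>C. Kw j > 0" unfolding Kw_eq using Zterm Zpos by simp
  define R where "R = opuc z Kw C (l - k')"
  have injC: "inj_on z C" using dist BCsub(2) by (rule inj_on_subset)
  have injB: "inj_on z B" using dist BCsub(3) by (rule inj_on_subset)
  have Rorth: "orthP z Kw C (l - k') R"
    unfolding R_def using opuc_orthP[OF finC injC Kwpos] cardC lC by simp
  define Q where "Q = Pi * R"
  have Rnz: "R \<noteq> 0" using Rorth unfolding orthP_def by auto
  have degQ: "degree Q = l" "coeff Q l = 1"
  proof -
    have dR: "degree R = l - k'" "coeff R (l - k') = 1" using Rorth unfolding orthP_def by auto
    show "degree Q = l" unfolding Q_def using degree_mult_eq[OF Pinz Rnz] dR degPi lC by simp
    have "coeff Q (degree Pi + degree R) = coeff Pi (degree Pi) * coeff R (degree R)"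
      unfolding Q_def by (rule coeff_mult_degree_sum)
    then show "coeff Q l = 1" using dR degPi lcPi lC by simp
  qed
  have QB: "poly Q (z p) = 0" if "p \<in> B" for p unfolding Q_def using Pi_zero[OF that] by simp
  have Qorth: "disc_inner z \<mu> C Q (Pi * S) = 0" if "degree S < l - k'" for S
  proof -
    have R0: "disc_inner z Kw C R S = 0"
      using orth_all[OF _ that] Rorth unfolding orthP_def by blast
    have "disc_inner z \<mu> C Q (Pi * S) = of_real Z * disc_inner z Kw C R S"
      unfolding disc_inner_def sum_distrib_left
    proof (intro sum.cong refl)
      fix j assume "j \<in> C"
      define a where "a = poly Pi (z j)"
      have aa: "complex_of_real ((cmod a)\<^sup>2) = a * cnj a" by (rule complex_norm_square)
      have kw: "complex_of_real (Kw j) = a * cnj a * of_real (\<mu> j) / of_real Z"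
        unfolding Kw_eq a_def[symmetric] of_real_divide of_real_mult aa ..
      have Zn: "complex_of_real Z \<noteq> 0" using Zpos by simp
      show "complex_of_real (\<mu> j) * poly Q (z j) * cnj (poly (Pi * S) (z j)) =
          of_real Z * (of_real (Kw j) * poly R (z j) * cnj (poly S (z j)))"
        unfolding Q_def poly_mult a_def[symmetric] kw using Zn by (simp add: field_simps)
    qed
    then show ?thesis using R0 by simp
  qed
  define A where "A = nrm z \<mu> C Q"
  have Qmin: "A \<le> nrm z \<mu> C p" if "degree p = l" "coeff p l = 1" "\<forall>s\<in>B. poly p (z s) = 0" for p
  proof -
    define d where "d = p - Q"
    have pQ: "p = Q + d" unfolding d_def by simp
    show ?thesis
    proof (cases "d = 0")
      case True then show ?thesis unfolding A_def d_def by simp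
    next
      case False
      have "\<forall>s\<in>B. poly d (z s) = 0" unfolding d_def using that(3) QB by simp
      then have "Pi dvd d" unfolding Pi_def by (rule prod_dvd_vanish[OF finB injB])
      then obtain S where S: "d = Pi * S" by (rule dvdE)
      then have Snz: "S \<noteq> 0" using False by auto
      have "degree d < l"
        using monic_diff_coeff[OF that(1,2) degQ] l1 unfolding d_def
        by (intro deg_less_from_coeff) auto
      then have "degree S < l - k'" unfolding S degree_mult_eq[OF Pinz Snz] degPi by simp
      then have "disc_inner z \<mu> C Q d = 0" unfolding S by (rule Qorth)
      then have "nrm z \<mu> C p = A + nrm z \<mu> C d" unfolding pQ A_def by (rule pythag)
      moreover have "nrm z \<mu> C d \<ge> 0" using munn by (intro nrm_nonneg) auto
      ultimately show ?thesis by simp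
    qed
  qed

  define N where "N t p = nrm z (lam t) {1..m} p" for t p
  define Dt where "Dt t = Q - P t" for t
  have degD: "degree (Dt t) < l" for t
  proof -
    have "degree (P t) = l" "coeff (P t) l = 1" using Porth[of t] unfolding orthP_def by auto
    then show ?thesis unfolding Dt_def using monic_diff_coeff[OF degQ] l1
      by (intro deg_less_from_coeff) auto
  qed
  have NQ: "N t Q = N t (P t) + N t (Dt t)" for t
  proof -
    have "disc_inner z (lam t) {1..m} (P t) (Dt t) = 0"
      using orth_all[OF _ degD] Porth[of t] unfolding orthP_def by blast
    then have "nrm z (lam t) {1..m} (P t + Dt t) = N t (P t) + N t (Dt t)"
      unfolding N_def by (rule pythag)
    then show ?thesis unfolding Dt_def N_def by simp
  qed
  have Nnn: "N t p \<ge> 0" for t p unfolding N_def using lamnn[of t] by (intro nrm_nonneg) auto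
  have NQ_eq: "N t Q = A + nrm z (lam t) D Q" for t
  proof -
    have "N t Q = nrm z (lam t) B Q + nrm z (lam t) C Q + nrm z (lam t) D Q"
      unfolding N_def U using finB finC finD BC by (simp add: nrm_union)
    moreover have "nrm z (lam t) B Q = 0" unfolding nrm_def using QB by simp
    moreover have "nrm z (lam t) C Q = A" unfolding nrm_def A_def using lamC by simp
    ultimately show ?thesis by simp
  qed
  have NQ_lim: "((\<lambda>t. N t Q) \<longlongrightarrow> A) at_top"
  proof -
    have "((\<lambda>t. nrm z (lam t) D Q) \<longlongrightarrow> 0) at_top"
      unfolding nrm_def lam_def
    proof (rule tendsto_null_sum)
      fix j assume "j \<in> D"
      have "((\<lambda>t. exp (t * (G (z j) - g))) \<longlongrightarrow> 0) at_top"
        using GD[OF \<open>j \<in> D\<close>] by (intro exp_neg_tendsto) simp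
      then show "((\<lambda>t. exp (t * (G (z j) - g)) * \<mu> j * (cmod (poly Q (z j)))\<^sup>2) \<longlongrightarrow> 0) at_top"
        by (intro tendsto_mult_left_zero)
    qed
    then have "((\<lambda>t. A + nrm z (lam t) D Q) \<longlongrightarrow> A + 0) at_top"
      by (intro tendsto_add tendsto_const)
    then show ?thesis unfolding NQ_eq by simp
  qed
  define M where "M = A + nrm z \<mu> D Q"
  have NQ_bound: "N t Q \<le> M" if "t \<ge> 0" for t
  proof -
    have "nrm z (lam t) D Q \<le> nrm z \<mu> D Q"
      unfolding nrm_def using lamle[OF that] by (intro sum_mono mult_right_mono) auto
    then show ?thesis unfolding NQ_eq M_def by simp
  qed
  have NP_bound: "N t (P t) \<le> N t Q" for t using NQ[of t] Nnn[of t "Dt t"] by simp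

  have PB: "((\<lambda>t. poly (P t) (z p)) \<longlongrightarrow> 0) at_top" if "p \<in> B" for p
  proof (rule tendsto_sq_zero)
    have mp: "\<mu> p > 0" using pos that BCsub by blast
    have lim: "((\<lambda>t. M / \<mu> p * exp (t * (g - G (z p)))) \<longlongrightarrow> 0) at_top"
      using GB[OF that] by (intro tendsto_mult_right_zero exp_neg_tendsto) simp
    have ev: "eventually (\<lambda>t. 0 \<le> (cmod (poly (P t) (z p)))\<^sup>2 \<and>
        (cmod (poly (P t) (z p)))\<^sup>2 \<le> M / \<mu> p * exp (t * (g - G (z p)))) at_top"
      using eventually_ge_at_top[of "0::real"]
    proof (rule eventually_mono)
      fix t :: real assume t: "0 \<le> t"
      define e where "e = exp (t * (G (z p) - g))"
      have e0: "e > 0" unfolding e_def by simp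
      have neg: "t * (g - G (z p)) = - (t * (G (z p) - g))" by (simp add: algebra_simps)
      have einv: "exp (t * (g - G (z p))) = 1 / e" unfolding e_def neg exp_minus
        by (simp add: divide_inverse)
      have "lam t p * (cmod (poly (P t) (z p)))\<^sup>2 \<le> N t (P t)"
          unfolding N_def using finM lamnn[of t] by (rule nrm_ge_term) (use that BCsub in blast)
      also have "\<dots> \<le> M" using NP_bound[of t] NQ_bound[OF t] by simp
      finally have "(e * \<mu> p) * (cmod (poly (P t) (z p)))\<^sup>2 \<le> M" unfolding lam_def e_def .
      then have "(cmod (poly (P t) (z p)))\<^sup>2 \<le> M / (e * \<mu> p)"
        using e0 mp by (simp add: pos_le_divide_eq mult.commute)
      also have "M / (e * \<mu> p) = M / \<mu> p * exp (t * (g - G (z p)))" unfolding einv by simp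
      finally show "0 \<le> (cmod (poly (P t) (z p)))\<^sup>2 \<and>
          (cmod (poly (P t) (z p)))\<^sup>2 \<le> M / \<mu> p * exp (t * (g - G (z p)))" by simp
    qed
    show "((\<lambda>t. (cmod (poly (P t) (z p)))\<^sup>2) \<longlongrightarrow> 0) at_top"
      by (rule squeeze0[OF ev lim])
  qed
  define E where "E t = interp z B (\<lambda>s. poly (P t) (z s))" for t
  have EC: "((\<lambda>t. nrm z \<mu> C (E t)) \<longlongrightarrow> 0) at_top"
    using finC
  proof (rule nrm_tendsto_zero)
    fix j assume "j \<in> C"
    show "((\<lambda>t. poly (E t) (z j)) \<longlongrightarrow> 0) at_top"
      unfolding E_def using finB PB by (rule tendsto_interp_poly)
  qed
  have PEmin: "A \<le> nrm z \<mu> C (P t - E t)" for t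
  proof (rule Qmin)
    have dP: "degree (P t) = l" "coeff (P t) l = 1" using Porth[of t] unfolding orthP_def by auto
    have dE: "degree (E t) < l" unfolding E_def
      using degree_interp[OF finB, of z "\<lambda>s. poly (P t) (z s)"] cardB lC by linarith
    show c1: "coeff (P t - E t) l = 1" using dP dE by (simp add: coeff_eq_0)
    have "\<forall>j>l. coeff (P t - E t) j = 0" using dP dE by (auto simp: coeff_eq_0)
    then have "degree (P t - E t) \<le> l" by (rule degree_le)
    moreover have "l \<le> degree (P t - E t)" using c1 by (intro le_degree) simp
    ultimately show "degree (P t - E t) = l" by simp
    show "\<forall>s\<in>B. poly (P t - E t) (z s) = 0"
      unfolding E_def using interp_at[OF finB injB] by simp
  qed
  have NC: "nrm z \<mu> C (P t) \<le> N t (P t)" for t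
  proof -
    have "nrm z \<mu> C (P t) = nrm z (lam t) C (P t)" unfolding nrm_def using lamC by simp
    also have "\<dots> \<le> N t (P t)" unfolding N_def using finM lamnn[of t] BCsub(2) by (rule nrm_mono_set)
    finally show ?thesis .
  qed
  have A0: "A \<ge> 0" unfolding A_def using munn by (intro nrm_nonneg) auto
  have ND_lim: "((\<lambda>t. N t (Dt t)) \<longlongrightarrow> 0) at_top"
  proof (rule order_tendstoI)
    fix a :: real assume "a < 0"
    then show "eventually (\<lambda>t. a < N t (Dt t)) at_top" using Nnn
      by (intro always_eventually) (auto intro: less_le_trans)
  next
    fix d :: real assume d: "0 < d"
    define e where "e = min 1 (d / (3 * (A + 1)))"
    have e0: "0 < e" "e \<le> 1" unfolding e_def using d A0 by auto
    have eA: "e * A \<le> d / 3"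
    proof -
      have "e \<le> d / (3 * (A + 1))" unfolding e_def by simp
      then have "e * A \<le> d / (3 * (A + 1)) * A" using A0 by (rule mult_right_mono)
      also have "\<dots> \<le> d / 3" using A0 d by (simp add: field_simps)
      finally show ?thesis .
    qed
    have ev1: "eventually (\<lambda>t. N t Q < A + d / 3) at_top"
      using order_tendstoD(2)[OF NQ_lim, of "A + d / 3"] d by simp
    have ev2: "eventually (\<lambda>t. nrm z \<mu> C (E t) < e * (d / 3)) at_top"
      using order_tendstoD(2)[OF EC, of "e * (d / 3)"] d e0 by simp
    show "eventually (\<lambda>t. N t (Dt t) < d) at_top"
      using ev1 ev2
    proof (rule eventually_elim2)
      fix t assume h1: "N t Q < A + d / 3" and h2: "nrm z \<mu> C (E t) < e * (d / 3)"
      have "(1 - e) * nrm z \<mu> C (P t - E t) - (1/e) * nrm z \<mu> C (E t) \<le> nrm z \<mu> C (P t - E t + E t)"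
        using finC munn(1) e0 by (rule nrm_add_ineq)
      then have i1: "(1 - e) * nrm z \<mu> C (P t - E t) - (1/e) * nrm z \<mu> C (E t) \<le> nrm z \<mu> C (P t)" by simp
      have i2: "(1 - e) * A \<le> (1 - e) * nrm z \<mu> C (P t - E t)"
        using PEmin[of t] e0 by (intro mult_left_mono) auto
      have i3: "(1/e) * nrm z \<mu> C (E t) < (1/e) * (e * (d / 3))"
        using h2 e0 by (intro mult_strict_left_mono) auto
      have i4: "(1/e) * (e * (d / 3)) = d / 3" using e0 by simp
      have "N t (Dt t) = N t Q - N t (P t)" using NQ[of t] by simp
      also have "\<dots> \<le> N t Q - nrm z \<mu> C (P t)" using NC[of t] by simp
      also have "\<dots> < d" using h1 i1 i2 i3 i4 eA by (simp add: algebra_simps)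
      finally show "N t (Dt t) < d" .
    qed
  qed
  have DC: "((\<lambda>t. poly (Dt t) (z j)) \<longlongrightarrow> 0) at_top" if "j \<in> {1..l}" for j
  proof (rule tendsto_sq_zero)
    have jBC: "j \<in> B \<union> C" using that lC unfolding B_def Ceq by auto
    have mj: "\<mu> j > 0" using pos jBC BCsub by blast
    have "((\<lambda>t. N t (Dt t) / \<mu> j) \<longlongrightarrow> 0 / \<mu> j) at_top"
      by (intro tendsto_divide ND_lim tendsto_const) (use mj in simp)
    then have lim: "((\<lambda>t. N t (Dt t) / \<mu> j) \<longlongrightarrow> 0) at_top" by simp
    have "eventually (\<lambda>t. 0 \<le> (cmod (poly (Dt t) (z j)))\<^sup>2 \<and>
        (cmod (poly (Dt t) (z j)))\<^sup>2 \<le> N t (Dt t) / \<mu> j) at_top"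
      using eventually_ge_at_top[of "0::real"]
    proof (rule eventually_mono)
      fix t :: real assume t: "0 \<le> t"
      have "\<mu> j * (cmod (poly (Dt t) (z j)))\<^sup>2 \<le> lam t j * (cmod (poly (Dt t) (z j)))\<^sup>2"
        using lamge[OF t jBC] by (intro mult_right_mono) auto
      also have "\<dots> \<le> N t (Dt t)"
        unfolding N_def using finM lamnn[of t] by (rule nrm_ge_term) (use jBC BCsub in blast)
      finally have "\<mu> j * (cmod (poly (Dt t) (z j)))\<^sup>2 \<le> N t (Dt t)" .
      then have "(cmod (poly (Dt t) (z j)))\<^sup>2 \<le> N t (Dt t) / \<mu> j"
        using mj by (simp add: pos_le_divide_eq mult.commute)
      then show "0 \<le> (cmod (poly (Dt t) (z j)))\<^sup>2 \<and> (cmod (poly (Dt t) (z j)))\<^sup>2 \<le> N t (Dt t) / \<mu> j"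
        by simp
    qed
    then show "((\<lambda>t. (cmod (poly (Dt t) (z j)))\<^sup>2) \<longlongrightarrow> 0) at_top"
      using lim by (rule squeeze0)
  qed
  have coeffD: "((\<lambda>t. coeff (Dt t) c) \<longlongrightarrow> 0) at_top" for c
  proof -
    have injl: "inj_on z {1..l}" using dist by (rule inj_on_subset) (use l1 in auto)
    have "Dt t = interp z {1..l} (\<lambda>s. poly (Dt t) (z s))" for t
      using interp_unique[OF _ injl] degD by simp
    then have "coeff (Dt t) c = coeff (interp z {1..l} (\<lambda>s. poly (Dt t) (z s))) c" for t
      by metis
    moreover have "((\<lambda>t. coeff (interp z {1..l} (\<lambda>s. poly (Dt t) (z s))) c) \<longlongrightarrow> 0) at_top"
      by (rule tendsto_interp_coeff) (auto intro: DC)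
    ultimately show ?thesis by simp
  qed
  have target: "(\<Prod>p\<in>{1..k (i - 1)}. [:- z p, 1:]) *
      opuc z (Kweights z \<mu> k i) (Kgroup k i) (l - k (i - 1)) = Q"
    unfolding Q_def Pi_def R_def B_def Kw_def C_def k'_def ..
  show ?thesis
  proof
    fix c
    have "((\<lambda>t. coeff Q c - coeff (Dt t) c) \<longlongrightarrow> coeff Q c - 0) at_top"
      by (intro tendsto_diff tendsto_const coeffD)
    moreover have "coeff (opuc z (tilt_weights z G \<mu> m t) {1..m} l) c = coeff Q c - coeff (Dt t) c" for t
      unfolding Peq Dt_def by simp
    ultimately show "((\<lambda>t::real. coeff (opuc z (tilt_weights z G \<mu> m t) {1..m} l) c)
            \<longlongrightarrow> coeff ((\<Prod>p\<in>{1..k (i - 1)}. [:- z p, 1:]) *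
                    opuc z (Kweights z \<mu> k i) (Kgroup k i) (l - k (i - 1))) c) at_top"
      unfolding target by simp
  qed
qed

end
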